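(* Let $d\ge 1$ and let $\mathcal{F}$ be a class of real-valued integrable functions on $[0,1]^d$; for $f\in\mathcal{F}$ write $\mu(f)=\int_{[0,1]^d} f(\boldsymbol{x})\,\mathrm{d}\boldsymbol{x}$. Let $\alpha>1$ and $0<m\le M<\infty$. Suppose that $\mathcal{F}$ has a superlinear root mean square lower bound, namely for every $n\ge 1$ and every choice of random points $\boldsymbol{x}_1,\dots,\boldsymbol{x}_n\in[0,1]^d$ (with arbitrary joint distribution), $$\sup_{f\in\mathcal{F}}\mathbb{E}\biggl(\biggl|\frac1n\sum_{i=1}^n f(\boldsymbol{x}_i)-\mu(f)\biggr|^2\biggr)^{1/2}> m n^{-\alpha},$$ where $\mathbb{E}$ denotes expectation over the randomness of the points. Suppose further that there is an infinite sequence of random points $\boldsymbol{x}_1,\boldsymbol{x}_2,\dots\in[0,1]^d$ (with arbitrary joint distribution; no unbiasedness or correlation assumptions) and a strictly increasing sequence of positive integers $n_1<n_2<\cdots$ such that $$\sup_{f\in\mathcal{F}}\mathbb{E}\biggl(\biggl|\frac1n\sum_{i=1}^n f(\boldsymbol{x}_i)-\mu(f)\biggr|^2\biggr)^{1/2}\le M n^{-\alpha}\quad\text{for all } n\in\{n_1,n_2,\dots\}.$$ Then for every $k\ge1$, the ratio $\rho=\rho_k=n_{k+1}/n_k$ satisfies $$\rho \ge 1 + \biggl[\frac{m}{M}\bigl(1+\rho^{1-\alpha}\bigr)^{-1}\biggr]^{1/(\alpha-1)} \ge 1 + \Bigl(\frac{m}{2M}\Bigr)^{1/(\alpha-1)}.$$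 *)

theory Defs
  imports "HOL-Probability.Probability"
begin

definition unit_cube :: "(real ^ 'd) set" where
  "unit_cube = cbox 0 1"

definition cube_mean :: "(real ^ 'd \<Rightarrow> real) \<Rightarrow> real" where
  "cube_mean f = (LINT x:unit_cube|lborel. f x)"

definition ennsqrt :: "ennreal \<Rightarrow> ennreal" where
  "ennsqrt e = (if e = top then top else ennreal (sqrt (enn2real e)))"

definition rmse :: "'w measure \<Rightarrow> ('w \<Rightarrow> nat \<Rightarrow> real ^ 'd) \<Rightarrow> nat \<Rightarrow> (real ^ 'd \<Rightarrow> real) \<Rightarrow> ennreal" where
  "rmse Q X n f =
     ennsqrt (\<integral>\<^sup>+ w. ennreal ((1 / real n * (\<Sum>i<n. f (X w i)) - cube_mean f)\<^sup>2) \<partial>Q)"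

definition worst_rmse :: "'w measure \<Rightarrow> ('w \<Rightarrow> nat \<Rightarrow> real ^ 'd) \<Rightarrow> nat \<Rightarrow> (real ^ 'd \<Rightarrow> real) set \<Rightarrow> ennreal" where
  "worst_rmse Q X n F = (SUP f\<in>F. rmse Q X n f)"

end

theory Submission
  imports Defs
begin


lemma ennsqrt_le_imp:
  assumes "ennsqrt e \<le> ennreal c" "0 \<le> c" shows "e \<le> ennreal (c^2)"
proof (cases "e = top")
  case True then have "ennsqrt e = top" by (simp add: ennsqrt_def)
  with assms show ?thesis using top.extremum_uniqueI by fastforce
next
  case False
  then have "ennreal (sqrt (enn2real e)) \<le> ennreal c" using assms by (simp add: ennsqrt_def)
  hence "sqrt (enn2real e) \<le> c" using assms by (simp add: ennreal_le_iff)
  hence "enn2real e \<le> c^2"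
    by (metis enn2real_nonneg real_le_rsqrt real_sqrt_le_iff real_sqrt_pow2_iff sqrt_le_D)
  thus ?thesis using False
    by (metis ennreal_enn2real ennreal_leI top.not_eq_extremum)
qed

lemma ennsqrt_le_intro:
  assumes "e \<le> ennreal (c^2)" "0 \<le> c" shows "ennsqrt e \<le> ennreal c"
proof -
  have ne: "e \<noteq> top" using assms(1) by (metis ennreal_neq_top top.extremum_uniqueI)
  have "enn2real e \<le> c^2" using assms
    by (metis enn2real_ennreal enn2real_mono ennreal_neq_top top.not_eq_extremum zero_le_power2)
  hence "sqrt (enn2real e) \<le> c" using assms(2) by (simp add: real_sqrt_le_iff' ) 
  thus ?thesis using ne by (simp add: ennsqrt_def ennreal_leI)
qed

lemma sq_split:
  fixes x y t :: real assumes "0 < t"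
  shows "(x - y)^2 \<le> (1+t)*x^2 + (1+1/t)*y^2"
proof -
  have "0 \<le> (t*x + y)^2 / t" using assms by simp
  also have "(t*x + y)^2 / t = t*x^2 + 2*x*y + y^2/t" using assms
    by (simp add: power2_eq_square field_simps)
  finally show ?thesis by (simp add: power2_eq_square field_simps)
qed

lemma sum_split_nat: "(\<Sum>i<n+N. g i) = (\<Sum>i<n. g i) + (\<Sum>i<N. g (n+i))"
  for g :: "nat \<Rightarrow> real"
  by (induction N) auto

lemma final_arith:
  fixes \<alpha> m M n n' N :: real
  assumes alpha: "\<alpha> > 1" and mM: "0 < m" "m \<le> M" and n: "0 < n" "n < n'" and N: "N = n' - n"
    and ineq: "m * N powr -\<alpha> < (M * n powr (1-\<alpha>) + M * n' powr (1-\<alpha>)) / N"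
  shows "let \<rho> = n' / n in
           \<rho> \<ge> 1 + ((m / M) * (1 + \<rho> powr (1 - \<alpha>)) powr (-1)) powr (1 / (\<alpha> - 1))
         \<and> 1 + ((m / M) * (1 + \<rho> powr (1 - \<alpha>)) powr (-1)) powr (1 / (\<alpha> - 1))
             \<ge> 1 + (m / (2 * M)) powr (1 / (\<alpha> - 1))"
proof -
  define \<rho> where "\<rho> = n' / n"
  have Npos: "N > 0" using N n by simp
  have rho1: "\<rho> > 1" using n by (simp add: \<rho>_def)
  have Nr: "N = (\<rho> - 1) * n" unfolding \<rho>_def N using n by (simp add: left_diff_distrib)
  have n'r: "n' = \<rho> * n" using n by (simp add: \<rho>_def)
  have "N powr (1-\<alpha>) = N * N powr (-\<alpha>)" using Npos powr_add[of N 1 "-\<alpha>"] by simp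
  hence "m * N powr (1-\<alpha>) = (m * N powr -\<alpha>) * N" by simp
  also have "\<dots> < M * n powr (1-\<alpha>) + M * n' powr (1-\<alpha>)" using ineq Npos
    by (simp add: pos_less_divide_eq)
  finally have i1: "m * N powr (1-\<alpha>) < M * n powr (1-\<alpha>) + M * n' powr (1-\<alpha>)" .
  have "N powr (1-\<alpha>) = (\<rho>-1) powr (1-\<alpha>) * n powr (1-\<alpha>)" using Nr rho1 n
    by (simp add: powr_mult)
  moreover have "n' powr (1-\<alpha>) = \<rho> powr (1-\<alpha>) * n powr (1-\<alpha>)" using n'r rho1 n
    by (simp add: powr_mult)
  ultimately have "(m * (\<rho>-1) powr (1-\<alpha>)) * n powr (1-\<alpha>) < (M * (1 + \<rho> powr (1-\<alpha>))) * n powr (1-\<alpha>)"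
    using i1 by (simp add: algebra_simps)
  hence i2: "m * (\<rho>-1) powr (1-\<alpha>) < M * (1 + \<rho> powr (1-\<alpha>))" using n
    by (simp add: mult_less_cancel_right)
  have Mpos: "M > 0" using mM by simp
  have S: "1 + \<rho> powr (1-\<alpha>) > 0" by (simp add: add_pos_nonneg)
  define c where "c = (m / M) * (1 + \<rho> powr (1 - \<alpha>)) powr (-1)"
  have c_eq: "c = m / (M * (1 + \<rho> powr (1 - \<alpha>)))" using S
    by (simp add: c_def powr_minus_divide)
  have cpos: "c > 0" using c_eq S Mpos mM by simp
  have "(\<rho>-1) powr (1-\<alpha>) * (\<rho>-1) powr (\<alpha>-1) = 1" using rho1
    by (simp add: powr_add[symmetric])
  have "c < (\<rho>-1) powr (\<alpha>-1)"
  proof -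
    have p: "(\<rho>-1) powr (\<alpha>-1) > 0" using rho1 by simp
    have e: "(\<rho>-1) powr (1-\<alpha>) = 1 / (\<rho>-1) powr (\<alpha>-1)" using rho1
      by (simp add: powr_minus_divide[symmetric] )
    have "m < M * (1 + \<rho> powr (1-\<alpha>)) * (\<rho>-1) powr (\<alpha>-1)"
      using i2 p unfolding e by (simp add: field_simps)
    thus ?thesis unfolding c_eq using S Mpos p by (simp add: divide_less_eq mult_ac)
  qed
  hence "c powr (1/(\<alpha>-1)) < ((\<rho>-1) powr (\<alpha>-1)) powr (1/(\<alpha>-1))"
    using cpos alpha by (intro powr_less_mono2) auto
  also have "\<dots> = \<rho> - 1" using alpha rho1 by (simp add: powr_powr)
  finally have A: "\<rho> \<ge> 1 + c powr (1/(\<alpha>-1))" by simp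
  have "\<rho> powr (1-\<alpha>) \<le> \<rho> powr 0" using rho1 alpha by (intro powr_mono) auto
  hence S2: "1 + \<rho> powr (1-\<alpha>) \<le> 2" using rho1 by simp
  have "m / (2 * M) \<le> c" unfolding c_eq using S S2 Mpos mM
    by (intro divide_left_mono) (auto intro: mult_pos_pos)
  hence B: "(m / (2*M)) powr (1/(\<alpha>-1)) \<le> c powr (1/(\<alpha>-1))"
    using alpha mM Mpos by (intro powr_mono2) auto
  show ?thesis using A B unfolding Let_def \<rho>_def[symmetric] c_def[symmetric] by simp
qed



theorem theorem2:
  fixes F :: "(real ^ 'd \<Rightarrow> real) set"
    and \<alpha> m M :: real
    and P :: "'w measure" and X :: "'w \<Rightarrow> nat \<Rightarrow> real ^ 'd"
    and nseq :: "nat \<Rightarrow> nat"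
  assumes F_meas: "\<And>f. f \<in> F \<Longrightarrow> f \<in> borel_measurable borel"
    and F_int: "\<And>f. f \<in> F \<Longrightarrow> set_integrable lborel unit_cube f"
    and alpha: "\<alpha> > 1"
    and mM: "0 < m" "m \<le> M"
    and lower: "\<And>n (Q :: (nat \<Rightarrow> real ^ 'd) measure).
                  n \<ge> 1 \<Longrightarrow> prob_space Q \<Longrightarrow> sets Q = sets (\<Pi>\<^sub>M i\<in>{..<n}. borel) \<Longrightarrow>
                  (AE w in Q. \<forall>i<n. w i \<in> unit_cube) \<Longrightarrow>
                  worst_rmse Q (\<lambda>w. w) n F > ennreal (m * real n powr (-\<alpha>))"
    and P: "prob_space P"
    and X_meas: "\<And>i. (\<lambda>w. X w i) \<in> borel_measurable P"
    and X_cube: "AE w in P. \<forall>i. X w i \<in> unit_cube"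
    and nseq_mono: "strict_mono nseq"
    and nseq_pos: "nseq 0 > 0"
    and upper: "\<And>j. worst_rmse P X (nseq j) F \<le> ennreal (M * real (nseq j) powr (-\<alpha>))"
  shows "\<forall>k. let \<rho> = real (nseq (Suc k)) / real (nseq k) in
           \<rho> \<ge> 1 + ((m / M) * (1 + \<rho> powr (1 - \<alpha>)) powr (-1)) powr (1 / (\<alpha> - 1))
         \<and> 1 + ((m / M) * (1 + \<rho> powr (1 - \<alpha>)) powr (-1)) powr (1 / (\<alpha> - 1))
             \<ge> 1 + (m / (2 * M)) powr (1 / (\<alpha> - 1))"
proof (intro allI)
  fix k
  have Mpos: "0 < M" using mM by simp
  have npos: "\<And>j. 0 < nseq j"
  proof -
    fix j have "nseq 0 \<le> nseq j" using nseq_mono by (simp add: strict_mono_less_eq)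
    thus "0 < nseq j" using nseq_pos by simp
  qed
  have key_n: "(\<integral>\<^sup>+w. ennreal (((\<Sum>i<nseq j. f (X w i)) - real (nseq j) * cube_mean f)^2) \<partial>P)
      \<le> ennreal ((M * real (nseq j) powr (1-\<alpha>))^2)" if f: "f \<in> F" for f j
  proof -
    let ?n = "nseq j"
    have fm[measurable]: "f \<in> borel_measurable borel" using F_meas f .
    note X_meas[measurable]
    have pos: "0 < real ?n" using npos by simp
    have "rmse P X ?n f \<le> worst_rmse P X ?n F" unfolding worst_rmse_def by (rule SUP_upper[OF f])
    also note upper
    finally have I: "(\<integral>\<^sup>+w. ennreal ((1 / real ?n * (\<Sum>i<?n. f (X w i)) - cube_mean f)^2) \<partial>P)
        \<le> ennreal ((M * real ?n powr -\<alpha>)^2)"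
      unfolding rmse_def using Mpos by (intro ennsqrt_le_imp) auto
    have eq: "ennreal (((\<Sum>i<?n. f (X w i)) - real ?n * cube_mean f)^2)
       = ennreal ((real ?n)^2) * ennreal ((1 / real ?n * (\<Sum>i<?n. f (X w i)) - cube_mean f)^2)" for w
    proof -
      have "real ?n * (1 / real ?n * (\<Sum>i<?n. f (X w i)) - cube_mean f)
          = (\<Sum>i<?n. f (X w i)) - real ?n * cube_mean f" using pos by (simp add: right_diff_distrib)
      hence "((\<Sum>i<?n. f (X w i)) - real ?n * cube_mean f)^2
          = (real ?n)^2 * (1 / real ?n * (\<Sum>i<?n. f (X w i)) - cube_mean f)^2"
        by (metis power_mult_distrib)
      thus ?thesis by (simp add: ennreal_mult)
    qed
    have "(\<integral>\<^sup>+w. ennreal (((\<Sum>i<?n. f (X w i)) - real ?n * cube_mean f)^2) \<partial>P)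
        = ennreal ((real ?n)^2) * (\<integral>\<^sup>+w. ennreal ((1 / real ?n * (\<Sum>i<?n. f (X w i)) - cube_mean f)^2) \<partial>P)"
      unfolding eq by (rule nn_integral_cmult) measurable
    also have "\<dots> \<le> ennreal ((real ?n)^2) * ennreal ((M * real ?n powr -\<alpha>)^2)"
      by (rule mult_left_mono[OF I]) simp
    also have "\<dots> = ennreal ((M * real ?n powr (1-\<alpha>))^2)"
    proof -
      have "real ?n powr (1-\<alpha>) = real ?n * real ?n powr (-\<alpha>)"
        using pos powr_add[of "real ?n" 1 "-\<alpha>"] by simp
      thus ?thesis by (simp add: ennreal_mult[symmetric] power_mult_distrib mult_ac)
    qed
    finally show ?thesis .
  qed
  define n where "n = nseq k"
  define n' where "n' = nseq (Suc k)"
  define N where "N = n' - n"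
  have nn': "n < n'" unfolding n_def n'_def using nseq_mono by (simp add: strict_mono_def)
  have npos': "0 < n" using npos n_def by simp
  have Npos: "0 < N" using nn' N_def by simp
  have n'eq: "n' = n + N" using nn' N_def by simp
  define a where "a = M * real n powr (1-\<alpha>)"
  define b where "b = M * real n' powr (1-\<alpha>)"
  have apos: "a > 0" using Mpos npos' by (simp add: a_def)
  have bpos: "b > 0" using Mpos nn' by (simp add: b_def)
  have key_diff: "(\<integral>\<^sup>+w. ennreal (((\<Sum>i<N. f (X w (n+i))) - real N * cube_mean f)^2) \<partial>P)
      \<le> ennreal ((a+b)^2)" if f: "f \<in> F" for f
  proof -
    have fm[measurable]: "f \<in> borel_measurable borel" using F_meas f .
    note X_meas[measurable]
    define e where "e w = (\<Sum>i<n. f (X w i)) - real n * cube_mean f" for w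
    define e' where "e' w = (\<Sum>i<n'. f (X w i)) - real n' * cube_mean f" for w
    have em[measurable]: "e \<in> borel_measurable P" unfolding e_def by measurable
    have em'[measurable]: "e' \<in> borel_measurable P" unfolding e'_def by measurable
    have split: "(\<Sum>i<N. f (X w (n+i))) - real N * cube_mean f = e' w - e w" for w
      unfolding e_def e'_def n'eq sum_split_nat by (simp add: algebra_simps)
    define t where "t = a / b"
    have tpos: "t > 0" using apos bpos t_def by simp
    have pw: "ennreal ((e' w - e w)^2) \<le> ennreal (1+t) * ennreal ((e' w)^2) + ennreal (1+1/t) * ennreal ((e w)^2)" for w
    proof -
      have "ennreal ((e' w - e w)^2) \<le> ennreal ((1+t)*(e' w)^2 + (1+1/t)*(e w)^2)"
        using sq_split[OF tpos] by (rule ennreal_leI)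
      also have "\<dots> = ennreal (1+t) * ennreal ((e' w)^2) + ennreal (1+1/t) * ennreal ((e w)^2)"
        using tpos by (simp add: ennreal_plus ennreal_mult)
      finally show ?thesis .
    qed
    have "(\<integral>\<^sup>+w. ennreal (((\<Sum>i<N. f (X w (n+i))) - real N * cube_mean f)^2) \<partial>P)
        = (\<integral>\<^sup>+w. ennreal ((e' w - e w)^2) \<partial>P)" unfolding split ..
    also have "\<dots> \<le> (\<integral>\<^sup>+w. ennreal (1+t) * ennreal ((e' w)^2) + ennreal (1+1/t) * ennreal ((e w)^2) \<partial>P)"
      by (rule nn_integral_mono) (rule pw)
    also have "\<dots> = ennreal (1+t) * (\<integral>\<^sup>+w. ennreal ((e' w)^2) \<partial>P) + ennreal (1+1/t) * (\<integral>\<^sup>+w. ennreal ((e w)^2) \<partial>P)"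
      by (simp add: nn_integral_add nn_integral_cmult)
    also have "\<dots> \<le> ennreal (1+t) * ennreal (b^2) + ennreal (1+1/t) * ennreal (a^2)"
    proof (intro add_mono mult_left_mono)
      show "(\<integral>\<^sup>+w. ennreal ((e' w)^2) \<partial>P) \<le> ennreal (b^2)"
        using key_n[OF f, of "Suc k"] unfolding e'_def b_def n'_def .
      show "(\<integral>\<^sup>+w. ennreal ((e w)^2) \<partial>P) \<le> ennreal (a^2)"
        using key_n[OF f, of "k"] unfolding e_def a_def n_def .
    qed auto
    also have "\<dots> = ennreal ((1+t) * b^2 + (1+1/t) * a^2)"
      using tpos by (simp add: ennreal_plus ennreal_mult)
    also have "(1+t) * b^2 + (1+1/t) * a^2 = (a+b)^2"
      unfolding t_def using apos bpos by (simp add: field_simps power2_eq_square)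
    finally show ?thesis .
  qed
  define T where "T = (\<lambda>w. \<lambda>i\<in>{..<N}. X w (n+i))"
  define Q where "Q = distr P (\<Pi>\<^sub>M i\<in>{..<N}. borel) T"
  have Tm: "T \<in> measurable P (\<Pi>\<^sub>M i\<in>{..<N}. borel)"
    unfolding T_def by (rule measurable_restrict) (rule X_meas)
  have Qp: "prob_space Q" unfolding Q_def by (rule prob_space.prob_space_distr[OF P Tm])
  have Qs: "sets Q = sets (\<Pi>\<^sub>M i\<in>{..<N}. borel)" unfolding Q_def by simp
  have Qae: "AE w in Q. \<forall>i<N. w i \<in> unit_cube"
  proof -
    have uc[measurable]: "unit_cube \<in> sets borel" unfolding unit_cube_def by simp
    have "{w \<in> space (\<Pi>\<^sub>M i\<in>{..<N}. borel). \<forall>i<N. w i \<in> unit_cube} \<in> sets (\<Pi>\<^sub>M i\<in>{..<N}. borel)"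
      by measurable
    moreover have "AE w in P. \<forall>i<N. T w i \<in> unit_cube"
      using X_cube by eventually_elim (simp add: T_def)
    ultimately show ?thesis unfolding Q_def by (simp add: AE_distr_iff[OF Tm])
  qed
  have low: "worst_rmse Q (\<lambda>w. w) N F > ennreal (m * real N powr (-\<alpha>))"
    using lower[OF _ Qp Qs Qae] Npos by simp
  have up: "worst_rmse Q (\<lambda>w. w) N F \<le> ennreal ((a+b) / real N)"
    unfolding worst_rmse_def
  proof (rule SUP_least)
    fix f assume f: "f \<in> F"
    have fm[measurable]: "f \<in> borel_measurable borel" using F_meas f .
    have gm: "(\<lambda>w. ennreal ((1 / real N * (\<Sum>i<N. f (w i)) - cube_mean f)^2)) \<in> borel_measurable (\<Pi>\<^sub>M i\<in>{..<N}. borel)"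
      by measurable
    have gm': "(\<lambda>w. ennreal ((1 / real N * (\<Sum>i<N. f (w i)) - cube_mean f)^2)) \<in> borel_measurable (distr P (\<Pi>\<^sub>M i\<in>{..<N}. borel) T)"
      using gm by simp
    have NP: "0 < real N" using Npos by simp
    have "rmse Q (\<lambda>w. w) N f = ennsqrt (\<integral>\<^sup>+ w. ennreal ((1 / real N * (\<Sum>i<N. f (T w i)) - cube_mean f)^2) \<partial>P)"
      unfolding rmse_def Q_def nn_integral_distr[OF Tm gm'] ..
    also have "(\<lambda>w. ennreal ((1 / real N * (\<Sum>i<N. f (T w i)) - cube_mean f)^2))
       = (\<lambda>w. ennreal ((1 / real N)^2) * ennreal (((\<Sum>i<N. f (X w (n+i))) - real N * cube_mean f)^2))"
    proof
      fix w
      have "(\<Sum>i<N. f (T w i)) = (\<Sum>i<N. f (X w (n+i)))" unfolding T_def by simp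
      moreover have "1 / real N * s - cube_mean f = 1 / real N * (s - real N * cube_mean f)" for s
        using NP by (simp add: field_simps)
      ultimately show "ennreal ((1 / real N * (\<Sum>i<N. f (T w i)) - cube_mean f)^2)
          = ennreal ((1 / real N)^2) * ennreal (((\<Sum>i<N. f (X w (n+i))) - real N * cube_mean f)^2)"
        by (simp add: ennreal_mult[symmetric] power_divide)
    qed
    also have "(\<integral>\<^sup>+ w. ennreal ((1 / real N)^2) * ennreal (((\<Sum>i<N. f (X w (n+i))) - real N * cube_mean f)^2) \<partial>P)
        = ennreal ((1 / real N)^2) * (\<integral>\<^sup>+ w. ennreal (((\<Sum>i<N. f (X w (n+i))) - real N * cube_mean f)^2) \<partial>P)"
      using X_meas[measurable] by (intro nn_integral_cmult) measurable
    also have "ennsqrt \<dots> \<le> ennreal ((a+b) / real N)"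
    proof (rule ennsqrt_le_intro)
      have "ennreal ((1 / real N)^2) * (\<integral>\<^sup>+ w. ennreal (((\<Sum>i<N. f (X w (n+i))) - real N * cube_mean f)^2) \<partial>P)
          \<le> ennreal ((1 / real N)^2) * ennreal ((a+b)^2)"
        by (rule mult_left_mono[OF key_diff[OF f]]) simp
      also have "\<dots> = ennreal (((a+b) / real N)^2)"
        by (simp add: ennreal_mult[symmetric] power_divide)
      finally show "ennreal ((1 / real N)^2) * (\<integral>\<^sup>+ w. ennreal (((\<Sum>i<N. f (X w (n+i))) - real N * cube_mean f)^2) \<partial>P)
          \<le> ennreal (((a+b) / real N)^2)" .
      show "0 \<le> (a+b) / real N" using apos bpos by simp
    qed
    finally show "rmse Q (\<lambda>w. w) N f \<le> ennreal ((a+b) / real N)" .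
  qed
  have "ennreal (m * real N powr (-\<alpha>)) < ennreal ((a+b) / real N)" using low up by simp
  hence ineq: "m * real N powr (-\<alpha>) < (a+b) / real N"
  proof -
    have "0 \<le> m * real N powr (-\<alpha>)" using mM by simp
    thus ?thesis using ennreal_less_iff \<open>ennreal (m * real N powr (-\<alpha>)) < ennreal ((a+b) / real N)\<close> by blast
  qed
  have "let \<rho> = real n' / real n in
           \<rho> \<ge> 1 + ((m / M) * (1 + \<rho> powr (1 - \<alpha>)) powr (-1)) powr (1 / (\<alpha> - 1))
         \<and> 1 + ((m / M) * (1 + \<rho> powr (1 - \<alpha>)) powr (-1)) powr (1 / (\<alpha> - 1))
             \<ge> 1 + (m / (2 * M)) powr (1 / (\<alpha> - 1))"
    by (rule final_arith[OF alpha mM, of "real n" "real n'" "real N"])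
      (use npos' nn' n'eq ineq in \<open>auto simp: a_def b_def\<close>)
  thus "let \<rho> = real (nseq (Suc k)) / real (nseq k) in
           \<rho> \<ge> 1 + ((m / M) * (1 + \<rho> powr (1 - \<alpha>)) powr (-1)) powr (1 / (\<alpha> - 1))
         \<and> 1 + ((m / M) * (1 + \<rho> powr (1 - \<alpha>)) powr (-1)) powr (1 / (\<alpha> - 1))
             \<ge> 1 + (m / (2 * M)) powr (1 / (\<alpha> - 1))" unfolding n_def n'_def .
qed

end
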